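(* Let $\mathcal{Q}$ be a poset and $\mathfrak A,\mathfrak X$ algebras on $\mathcal{Q}$. The following are equivalent: 1. for every finitely $\mathfrak X$-encoded persistence module $M$ over $\mathcal{Q}$, the Hilbert function $q\mapsto\dim M(q)$ is $\mathfrak A$-measurable; 2. every upset $U\subseteq\mathcal{Q}$ with $U\in\mathfrak X$ belongs to $\mathfrak A$, equivalently $\mathfrak X_{\mathrm{Up}}\subseteq\mathfrak A$. Moreover, the implication (2)$\Rightarrow$(1) remains valid when $\mathrm{Vect}$ is replaced by any abelian category $\mathcal{A}$ and the Hilbert function by $q\mapsto\alpha(A(q))$ for any amplitude $\alpha$ on $\mathcal{A}$, for every finitely $\mathfrak X$-encoded object $A$ of $\mathcal{A}^{\mathcal{Q}}$.
   Context: $\mathrm{Vect}$ is the category of finite-dimensional vector spaces over a field; a persistence module over $\mathcal{Q}$ is a functor $\mathcal{Q}\to\mathrm{Vect}$. An algebra on a set is a family of subsets containing $\emptyset$, closed under complements and finite unions. An upset $U$ satisfies $u\in U,u\le q\Rightarrow q\in U$. $\mathfrak X_{\mathrm{Up}}$ is the algebra generated by the upsets belonging to $\mathfrak X$. An object $A$ of a functor category $\mathcal{C}^{\mathcal{Q}}$ is finitely $\mathfrak X$-encoded if there are a finite poset $\mathcal P$, an order-preserving map $e\colon\mathcal{Q}\to\mathcal P$ with every fiber $e^{-1}(p)\in\mathfrak X$, an object $A'\in\mathcal{C}^{\mathcal P}$ (pointwise finite-dimensional when $\mathcal{C}=\mathrm{Vect}$) and an isomorphism $A\cong A'\circ e$.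 A function $g\colon\mathcal{Q}\to[0,\infty]$ is $\mathfrak A$-measurable if the preimage of every Borel subset of $[0,\infty]$ lies in $\mathfrak A$. An amplitude on an abelian category $\mathcal{A}$ is a function $\alpha\colon\operatorname{ob}\mathcal{A}\to[0,\infty]$ with $\alpha(0)=0$, $\alpha(A)\le\alpha(B)$, $\alpha(C)\le\alpha(B)$ and $\alpha(B)\le\alpha(A)+\alpha(C)$ for every short exact sequence $0\to A\to B\to C\to0$. *)

theory Defs
  imports "HOL-Analysis.Analysis" "HOL-Library.Function_Algebras"
begin

definition upset :: "'q::order set \<Rightarrow> bool" where
  "upset U \<longleftrightarrow> (\<forall>u q. u \<in> U \<longrightarrow> u \<le> q \<longrightarrow> q \<in> U)"

definition gen_algebra :: "'a set \<Rightarrow> 'a set set \<Rightarrow> 'a set set" where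
  "gen_algebra \<Omega> G = \<Inter>{M. algebra \<Omega> M \<and> G \<subseteq> M}"

definition measurable_wrt :: "'q set set \<Rightarrow> ('q \<Rightarrow> ennreal) \<Rightarrow> bool" where
  "measurable_wrt \<AA> g \<longleftrightarrow> (\<forall>B \<in> sets (borel :: ennreal measure). g -` B \<in> \<AA>)"

definition fin_poset :: "nat set \<Rightarrow> (nat \<Rightarrow> nat \<Rightarrow> bool) \<Rightarrow> bool" where
  "fin_poset P le \<longleftrightarrow> finite P \<and> (\<forall>p\<in>P. le p p)
     \<and> (\<forall>p\<in>P. \<forall>p'\<in>P. le p p' \<longrightarrow> le p' p \<longrightarrow> p = p')
     \<and> (\<forall>p\<in>P. \<forall>p'\<in>P. \<forall>p''\<in>P. le p p' \<longrightarrow> le p' p'' \<longrightarrow> le p p'')"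

definition encoding_map :: "'q::order set set \<Rightarrow> nat set \<Rightarrow> (nat \<Rightarrow> nat \<Rightarrow> bool) \<Rightarrow> ('q \<Rightarrow> nat) \<Rightarrow> bool" where
  "encoding_map \<XX> P le e \<longleftrightarrow> fin_poset P le \<and> (\<forall>q. e q \<in> P)
     \<and> (\<forall>q q'. q \<le> q' \<longrightarrow> le (e q) (e q')) \<and> (\<forall>p\<in>P. e -` {p} \<in> \<XX>)"

text \<open>Ambient vector space k^(N); every finite-dimensional k-vector space is isomorphic
  to a subspace of it.\<close>
type_synonym 'k vec = "nat \<Rightarrow> 'k"

definition vscale :: "'k::field \<Rightarrow> 'k vec \<Rightarrow> 'k vec" where
  "vscale c v = (\<lambda>n. c * v n)"

definition fd_subspace :: "'k::field vec set \<Rightarrow> bool" where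
  "fd_subspace S \<longleftrightarrow> module.subspace vscale S \<and> (\<exists>B. finite B \<and> S = module.span vscale B)"

definition vdim :: "'k::field vec set \<Rightarrow> nat" where
  "vdim S = vector_space.dim vscale S"

definition linear_on :: "'k::field vec set \<Rightarrow> ('k vec \<Rightarrow> 'k vec) \<Rightarrow> bool" where
  "linear_on S f \<longleftrightarrow> (\<forall>x\<in>S. \<forall>y\<in>S. f (x + y) = f x + f y)
     \<and> (\<forall>c. \<forall>x\<in>S. f (vscale c x) = vscale c (f x))"

definition vect_pmod :: "'i set \<Rightarrow> ('i \<Rightarrow> 'i \<Rightarrow> bool) \<Rightarrow> ('i \<Rightarrow> 'k::field vec set)
    \<Rightarrow> ('i \<Rightarrow> 'i \<Rightarrow> 'k vec \<Rightarrow> 'k vec) \<Rightarrow> bool" where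
  "vect_pmod I le V \<phi> \<longleftrightarrow> (\<forall>i\<in>I. fd_subspace (V i))
     \<and> (\<forall>i\<in>I. \<forall>j\<in>I. le i j \<longrightarrow> linear_on (V i) (\<phi> i j) \<and> \<phi> i j ` V i \<subseteq> V j)
     \<and> (\<forall>i\<in>I. \<forall>x\<in>V i. \<phi> i i x = x)
     \<and> (\<forall>i\<in>I. \<forall>j\<in>I. \<forall>l\<in>I. le i j \<longrightarrow> le j l \<longrightarrow> (\<forall>x\<in>V i. \<phi> j l (\<phi> i j x) = \<phi> i l x))"

definition vect_fin_encoded :: "'q::order set set \<Rightarrow> ('q \<Rightarrow> 'k::field vec set)
    \<Rightarrow> ('q \<Rightarrow> 'q \<Rightarrow> 'k vec \<Rightarrow> 'k vec) \<Rightarrow> bool" where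
  "vect_fin_encoded \<XX> V \<phi> \<longleftrightarrow>
     (\<exists>(P::nat set) le e (V' :: nat \<Rightarrow> 'k vec set) \<phi>' \<eta>.
        encoding_map \<XX> P le e \<and> vect_pmod P le V' \<phi>'
        \<and> (\<forall>q. linear_on (V q) (\<eta> q) \<and> bij_betw (\<eta> q) (V q) (V' (e q)))
        \<and> (\<forall>q q'. q \<le> q' \<longrightarrow> (\<forall>x\<in>V q. \<eta> q' (\<phi> q q' x) = \<phi>' (e q) (e q') (\<eta> q x))))"

record ('o, 'm) category =
  Dom :: "'m \<Rightarrow> 'o"
  Cod :: "'m \<Rightarrow> 'o"
  Comp :: "'m \<Rightarrow> 'm \<Rightarrow> 'm"   (* Comp C g f = g o f *)
  Idm :: "'o \<Rightarrow> 'm"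

definition is_category :: "('o, 'm) category \<Rightarrow> bool" where
  "is_category C \<longleftrightarrow>
     (\<forall>A. Dom C (Idm C A) = A \<and> Cod C (Idm C A) = A)
   \<and> (\<forall>f g. Cod C f = Dom C g \<longrightarrow> Dom C (Comp C g f) = Dom C f \<and> Cod C (Comp C g f) = Cod C g)
   \<and> (\<forall>f. Comp C (Idm C (Cod C f)) f = f \<and> Comp C f (Idm C (Dom C f)) = f)
   \<and> (\<forall>f g h. Cod C f = Dom C g \<longrightarrow> Cod C g = Dom C h \<longrightarrow>
        Comp C h (Comp C g f) = Comp C (Comp C h g) f)"

definition hom :: "('o, 'm) category \<Rightarrow> 'o \<Rightarrow> 'o \<Rightarrow> 'm set" where
  "hom C A B = {f. Dom C f = A \<and> Cod C f = B}"

definition cat_mono :: "('o, 'm) category \<Rightarrow> 'm \<Rightarrow> bool" where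
  "cat_mono C f \<longleftrightarrow> (\<forall>g h. Cod C g = Dom C f \<longrightarrow> Cod C h = Dom C f \<longrightarrow> Dom C g = Dom C h \<longrightarrow>
       Comp C f g = Comp C f h \<longrightarrow> g = h)"

definition cat_epi :: "('o, 'm) category \<Rightarrow> 'm \<Rightarrow> bool" where
  "cat_epi C f \<longleftrightarrow> (\<forall>g h. Dom C g = Cod C f \<longrightarrow> Dom C h = Cod C f \<longrightarrow> Cod C g = Cod C h \<longrightarrow>
       Comp C g f = Comp C h f \<longrightarrow> g = h)"

definition cat_iso :: "('o, 'm) category \<Rightarrow> 'm \<Rightarrow> bool" where
  "cat_iso C f \<longleftrightarrow> (\<exists>g. g \<in> hom C (Cod C f) (Dom C f)
       \<and> Comp C g f = Idm C (Dom C f) \<and> Comp C f g = Idm C (Cod C f))"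

definition zero_obj :: "('o, 'm) category \<Rightarrow> 'o \<Rightarrow> bool" where
  "zero_obj C Z \<longleftrightarrow> (\<forall>A. (\<exists>!f. f \<in> hom C Z A) \<and> (\<exists>!f. f \<in> hom C A Z))"

definition zero_mor :: "('o, 'm) category \<Rightarrow> 'm \<Rightarrow> bool" where
  "zero_mor C h \<longleftrightarrow> (\<exists>Z f g. zero_obj C Z \<and> f \<in> hom C (Dom C h) Z \<and> g \<in> hom C Z (Cod C h)
       \<and> h = Comp C g f)"

definition is_kernel :: "('o, 'm) category \<Rightarrow> 'm \<Rightarrow> 'm \<Rightarrow> bool" where
  "is_kernel C k f \<longleftrightarrow> Cod C k = Dom C f \<and> zero_mor C (Comp C f k)
     \<and> (\<forall>g. Cod C g = Dom C f \<and> zero_mor C (Comp C f g) \<longrightarrow>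
          (\<exists>!u. u \<in> hom C (Dom C g) (Dom C k) \<and> Comp C k u = g))"

definition is_cokernel :: "('o, 'm) category \<Rightarrow> 'm \<Rightarrow> 'm \<Rightarrow> bool" where
  "is_cokernel C c f \<longleftrightarrow> Dom C c = Cod C f \<and> zero_mor C (Comp C c f)
     \<and> (\<forall>g. Dom C g = Cod C f \<and> zero_mor C (Comp C g f) \<longrightarrow>
          (\<exists>!u. u \<in> hom C (Cod C c) (Cod C g) \<and> Comp C u c = g))"

definition has_bin_products :: "('o, 'm) category \<Rightarrow> bool" where
  "has_bin_products C \<longleftrightarrow> (\<forall>A B. \<exists>P p1 p2. p1 \<in> hom C P A \<and> p2 \<in> hom C P B
     \<and> (\<forall>X f g. f \<in> hom C X A \<and> g \<in> hom C X B \<longrightarrow>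
          (\<exists>!u. u \<in> hom C X P \<and> Comp C p1 u = f \<and> Comp C p2 u = g)))"

definition has_bin_coproducts :: "('o, 'm) category \<Rightarrow> bool" where
  "has_bin_coproducts C \<longleftrightarrow> (\<forall>A B. \<exists>S i1 i2. i1 \<in> hom C A S \<and> i2 \<in> hom C B S
     \<and> (\<forall>X f g. f \<in> hom C A X \<and> g \<in> hom C B X \<longrightarrow>
          (\<exists>!u. u \<in> hom C S X \<and> Comp C u i1 = f \<and> Comp C u i2 = g)))"

text \<open>Abelian category (Freyd's definition: the additive structure is then determined).\<close>
definition abelian_cat :: "('o, 'm) category \<Rightarrow> bool" where
  "abelian_cat C \<longleftrightarrow> is_category C \<and> (\<exists>Z. zero_obj C Z)
     \<and> has_bin_products C \<and> has_bin_coproducts C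
     \<and> (\<forall>f. \<exists>k. is_kernel C k f) \<and> (\<forall>f. \<exists>c. is_cokernel C c f)
     \<and> (\<forall>f. cat_mono C f \<longrightarrow> (\<exists>g. is_kernel C f g))
     \<and> (\<forall>f. cat_epi C f \<longrightarrow> (\<exists>g. is_cokernel C f g))"

definition short_exact :: "('o, 'm) category \<Rightarrow> 'm \<Rightarrow> 'm \<Rightarrow> bool" where
  "short_exact C f g \<longleftrightarrow> Cod C f = Dom C g \<and> is_kernel C f g \<and> is_cokernel C g f"

definition amplitude :: "('o, 'm) category \<Rightarrow> ('o \<Rightarrow> ennreal) \<Rightarrow> bool" where
  "amplitude C \<alpha> \<longleftrightarrow> (\<forall>Z. zero_obj C Z \<longrightarrow> \<alpha> Z = 0)
     \<and> (\<forall>f g. short_exact C f g \<longrightarrow>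
          \<alpha> (Dom C f) \<le> \<alpha> (Cod C f) \<and> \<alpha> (Cod C g) \<le> \<alpha> (Cod C f)
          \<and> \<alpha> (Cod C f) \<le> \<alpha> (Dom C f) + \<alpha> (Cod C g))"

definition cat_functor :: "('o, 'm) category \<Rightarrow> 'i set \<Rightarrow> ('i \<Rightarrow> 'i \<Rightarrow> bool)
    \<Rightarrow> ('i \<Rightarrow> 'o) \<Rightarrow> ('i \<Rightarrow> 'i \<Rightarrow> 'm) \<Rightarrow> bool" where
  "cat_functor C I le F0 F1 \<longleftrightarrow>
     (\<forall>i\<in>I. \<forall>j\<in>I. le i j \<longrightarrow> F1 i j \<in> hom C (F0 i) (F0 j))
   \<and> (\<forall>i\<in>I. F1 i i = Idm C (F0 i))
   \<and> (\<forall>i\<in>I. \<forall>j\<in>I. \<forall>l\<in>I. le i j \<longrightarrow> le j l \<longrightarrow> Comp C (F1 j l) (F1 i j) = F1 i l)"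

definition cat_fin_encoded :: "('o, 'm) category \<Rightarrow> 'q::order set set
    \<Rightarrow> ('q \<Rightarrow> 'o) \<Rightarrow> ('q \<Rightarrow> 'q \<Rightarrow> 'm) \<Rightarrow> bool" where
  "cat_fin_encoded C \<XX> F0 F1 \<longleftrightarrow>
     (\<exists>(P::nat set) le e G0 G1 \<eta>.
        encoding_map \<XX> P le e \<and> cat_functor C P le G0 G1
        \<and> (\<forall>q. \<eta> q \<in> hom C (F0 q) (G0 (e q)) \<and> cat_iso C (\<eta> q))
        \<and> (\<forall>q q'. q \<le> q' \<longrightarrow> Comp C (\<eta> q') (F1 q q') = Comp C (G1 (e q) (e q')) (\<eta> q)))"

end

theory Submission
  imports Defs
begin

interpretation vs: vector_space "vscale :: 'k::field \<Rightarrow> 'k vec \<Rightarrow> 'k vec"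
  by unfold_locales (auto simp: vscale_def fun_eq_iff algebra_simps)

interpretation vsp: vector_space_pair "vscale :: 'k::field \<Rightarrow> 'k vec \<Rightarrow> 'k vec" "vscale :: 'k::field \<Rightarrow> 'k vec \<Rightarrow> 'k vec"
  by unfold_locales

lemma vdim_bij:
  fixes S T :: "'k::field vec set"
  assumes S: "vs.subspace S" and lin: "linear_on S \<eta>" and bij: "bij_betw \<eta> S T"
  shows "vdim S = vdim T"
proof -
  obtain B where B: "B \<subseteq> S" "vs.independent B" "S \<subseteq> vs.span B" "card B = vs.dim S"
    using vs.basis_exists by blast
  have SB: "vs.span B = S" using vs.span_subspace B S by blast
  obtain g where g: "Vector_Spaces.linear vscale vscale g" "\<forall>x\<in>B. g x = \<eta> x"
    using vsp.linear_independent_extend[OF B(2)] by blast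
  have sub: "vs.subspace {x\<in>S. g x = \<eta> x}"
  proof (rule vs.subspaceI)
    have z: "vscale 0 (0::'k vec) = 0" by (simp add: vscale_def fun_eq_iff)
    have "\<eta> 0 = \<eta> (vscale 0 0)" by (simp only: z)
    also have "\<dots> = vscale 0 (\<eta> 0)" using lin vs.subspace_0[OF S] unfolding linear_on_def by blast
    also have "\<dots> = 0" by (simp add: vscale_def fun_eq_iff)
    finally show "0 \<in> {x\<in>S. g x = \<eta> x}" using vsp.linear_0[OF g(1)] vs.subspace_0[OF S] by simp
  next
    fix x y assume "x \<in> {x\<in>S. g x = \<eta> x}" "y \<in> {x\<in>S. g x = \<eta> x}"
    then show "x + y \<in> {x\<in>S. g x = \<eta> x}"
      using lin vsp.linear_add[OF g(1)] vs.subspace_add[OF S] unfolding linear_on_def by auto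
  next
    fix c x assume "x \<in> {x\<in>S. g x = \<eta> x}"
    then show "vscale c x \<in> {x\<in>S. g x = \<eta> x}"
      using lin vsp.linear_scale[OF g(1)] vs.subspace_scale[OF S] unfolding linear_on_def by auto
  qed
  have eq: "\<forall>x\<in>S. g x = \<eta> x"
  proof
    fix x assume "x \<in> S"
    then have "x \<in> vs.span B" using SB by simp
    then have "x \<in> {x\<in>S. g x = \<eta> x}"
      by (rule vs.span_subspace_induct[OF _ sub]) (use B g in auto)
    then show "g x = \<eta> x" by simp
  qed
  have inj: "inj_on g S" using bij eq unfolding bij_betw_def by (metis inj_on_cong)
  have TS: "T = g ` S"
  proof -
    have "T = \<eta> ` S" using bij by (simp add: bij_betw_def)
    also have "\<dots> = g ` S" using eq by (intro image_cong) auto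
    finally show ?thesis .
  qed
  have T2: "T = vs.span (g ` B)" using TS SB vsp.linear_span_image[OF g(1)] by simp
  have ind: "vs.independent (g ` B)"
    using vsp.linear_dependent_inj_imageD[OF g(1)] inj SB B(2) by metis
  have "card (g ` B) = card B" using card_image inj_on_subset[OF inj B(1)] by blast
  then have "vs.dim T = vs.dim S" using T2 vs.dim_span vs.dim_eq_card_independent[OF ind] B(4) by simp
  then show ?thesis unfolding vdim_def by simp
qed

lemma zero_mor_cod:
  assumes C: "is_category C" and Z: "zero_obj C Z" and h: "Cod C h = Z"
  shows "zero_mor C h"
proof -
  have "Comp C (Idm C Z) h = h" using C h unfolding is_category_def by metis
  moreover have "Idm C Z \<in> hom C Z (Cod C h)" using C h unfolding is_category_def hom_def by simp
  moreover have "h \<in> hom C (Dom C h) Z" using h unfolding hom_def by simp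
  ultimately show ?thesis unfolding zero_mor_def using Z by metis
qed

lemma amp_iso:
  assumes ab: "abelian_cat C" and amp: "amplitude C \<alpha>" and f: "f \<in> hom C A B" and iso: "cat_iso C f"
  shows "\<alpha> A = \<alpha> B"
proof -
  have C: "is_category C" using ab unfolding abelian_cat_def by simp
  obtain Z where Z: "zero_obj C Z" using ab unfolding abelian_cat_def by blast
  have Did: "\<And>X. Dom C (Idm C X) = X" and Cid: "\<And>X. Cod C (Idm C X) = X"
    using C unfolding is_category_def by auto
  have DC: "\<And>f g. Cod C f = Dom C g \<Longrightarrow> Dom C (Comp C g f) = Dom C f"
    and CC: "\<And>f g. Cod C f = Dom C g \<Longrightarrow> Cod C (Comp C g f) = Cod C g"
    using C unfolding is_category_def by auto
  have idl: "\<And>f. Comp C (Idm C (Cod C f)) f = f" and idr: "\<And>f. Comp C f (Idm C (Dom C f)) = f"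
    using C unfolding is_category_def by auto
  have assoc: "\<And>f g h. Cod C f = Dom C g \<Longrightarrow> Cod C g = Dom C h \<Longrightarrow>
        Comp C h (Comp C g f) = Comp C (Comp C h g) f"
    using C unfolding is_category_def by auto
  obtain g where g: "g \<in> hom C B A" "Comp C g f = Idm C A" "Comp C f g = Idm C B"
    using iso f unfolding cat_iso_def hom_def by auto
  have fD: "Dom C f = A" and fC: "Cod C f = B" using f unfolding hom_def by auto
  have gD: "Dom C g = B" and gC: "Cod C g = A" using g unfolding hom_def by auto
  obtain t where t: "t \<in> hom C B Z" using Z unfolding zero_obj_def by blast
  have tD: "Dom C t = B" and tC: "Cod C t = Z" using t unfolding hom_def by auto
  have tf: "zero_mor C (Comp C t f)"
    by (rule zero_mor_cod[OF C Z]) (simp add: CC fC tD tC)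
  have ker: "is_kernel C f t"
    unfolding is_kernel_def
  proof (intro conjI allI impI)
    show "Cod C f = Dom C t" using fC tD by simp
    show "zero_mor C (Comp C t f)" by (rule tf)
    fix k assume k: "Cod C k = Dom C t \<and> zero_mor C (Comp C t k)"
    then have kC: "Cod C k = B" using tD by simp
    show "\<exists>!u. u \<in> hom C (Dom C k) (Dom C f) \<and> Comp C f u = k"
    proof (rule ex1I[of _ "Comp C g k"])
      show "Comp C g k \<in> hom C (Dom C k) (Dom C f) \<and> Comp C f (Comp C g k) = k"
        using kC gD gC fD fC DC CC assoc[of k g f] g(3) idl[of k] unfolding hom_def by auto
    next
      fix u assume u: "u \<in> hom C (Dom C k) (Dom C f) \<and> Comp C f u = k"
      then have uC: "Cod C u = A" using fD unfolding hom_def by auto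
      have "u = Comp C (Idm C (Cod C u)) u" using idl by simp
      also have "\<dots> = Comp C (Comp C g f) u" using uC g(2) by simp
      also have "\<dots> = Comp C g (Comp C f u)" using assoc[of u f g] uC fD fC gD by simp
      also have "\<dots> = Comp C g k" using u by simp
      finally show "u = Comp C g k" .
    qed
  qed
  have cok: "is_cokernel C t f"
    unfolding is_cokernel_def
  proof (intro conjI allI impI)
    show "Dom C t = Cod C f" using fC tD by simp
    show "zero_mor C (Comp C t f)" by (rule tf)
    fix k assume k: "Dom C k = Cod C f \<and> zero_mor C (Comp C k f)"
    then have kD: "Dom C k = B" using fC by simp
    obtain Z' a b where ab: "zero_obj C Z'" "a \<in> hom C (Dom C (Comp C k f)) Z'"
      "b \<in> hom C Z' (Cod C (Comp C k f))" "Comp C k f = Comp C b a"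
      using k unfolding zero_mor_def by blast
    have aD: "Dom C a = A" and aC: "Cod C a = Z'" using ab(2) DC[of f k] kD fC fD unfolding hom_def by auto
    have bD: "Dom C b = Z'" and bC: "Cod C b = Cod C k" using ab(3) CC[of f k] kD fC unfolding hom_def by auto
    obtain i where i: "i \<in> hom C Z Z'" using Z unfolding zero_obj_def by blast
    have iD: "Dom C i = Z" and iC: "Cod C i = Z'" using i unfolding hom_def by auto
    have "Comp C a g \<in> hom C B Z'" using aD aC gD gC DC CC unfolding hom_def by auto
    moreover have "Comp C i t \<in> hom C B Z'" using iD iC tD tC DC CC unfolding hom_def by auto
    ultimately have agit: "Comp C a g = Comp C i t" using ab(1) unfolding zero_obj_def by blast
    have "k = Comp C k (Idm C (Dom C k))" using idr by simp
    also have "\<dots> = Comp C k (Comp C f g)" using kD g(3) by simp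
    also have "\<dots> = Comp C (Comp C k f) g" using assoc[of g f k] gC fD fC kD by simp
    also have "\<dots> = Comp C (Comp C b a) g" using ab(4) by simp
    also have "\<dots> = Comp C b (Comp C a g)" using assoc[of g a b] gC aD aC bD by simp
    also have "\<dots> = Comp C b (Comp C i t)" using agit by simp
    also have "\<dots> = Comp C (Comp C b i) t" using assoc[of t i b] tC iD iC bD by simp
    finally have keq: "k = Comp C (Comp C b i) t" .
    have bi: "Comp C b i \<in> hom C (Cod C t) (Cod C k)" using iD iC bD bC tC DC CC unfolding hom_def by auto
    show "\<exists>!u. u \<in> hom C (Cod C t) (Cod C k) \<and> Comp C u t = k"
    proof (rule ex1I[of _ "Comp C b i"])
      show "Comp C b i \<in> hom C (Cod C t) (Cod C k) \<and> Comp C (Comp C b i) t = k" using bi keq by simp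
    next
      fix u assume "u \<in> hom C (Cod C t) (Cod C k) \<and> Comp C u t = k"
      then show "u = Comp C b i" using bi Z tC unfolding zero_obj_def by metis
    qed
  qed
  have se: "short_exact C f t" unfolding short_exact_def using ker cok fC tD by simp
  have aZ: "\<alpha> Z = 0" using amp Z unfolding amplitude_def by blast
  have "\<alpha> A \<le> \<alpha> B" and "\<alpha> B \<le> \<alpha> A + \<alpha> Z"
    using amp se fD fC tC unfolding amplitude_def by metis+
  then show ?thesis using aZ by (simp add: order_antisym)
qed

lemma fiber_in:
  fixes \<AA> \<XX> :: "'q::order set set"
  assumes A: "algebra UNIV \<AA>" and X: "algebra UNIV \<XX>"
    and H: "\<forall>U\<in>\<XX>. upset U \<longrightarrow> U \<in> \<AA>"
    and e: "encoding_map \<XX> P le e" and p: "p \<in> P"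
  shows "e -` {p} \<in> \<AA>"
proof -
  interpret X: algebra UNIV \<XX> by (rule X)
  interpret A: algebra UNIV \<AA> by (rule A)
  have fp: "fin_poset P le" and eP: "\<forall>q. e q \<in> P" and mono: "\<forall>q q'. q \<le> q' \<longrightarrow> le (e q) (e q')"
    and fib: "\<forall>p\<in>P. e -` {p} \<in> \<XX>" using e unfolding encoding_map_def by blast+
  have fin: "finite P" and refl: "le p p"
    and anti: "\<forall>p\<in>P. \<forall>p'\<in>P. le p p' \<longrightarrow> le p' p \<longrightarrow> p = p'"
    and trans: "\<forall>p\<in>P. \<forall>p'\<in>P. \<forall>p''\<in>P. le p p' \<longrightarrow> le p' p'' \<longrightarrow> le p p''"
    using fp p unfolding fin_poset_def by blast+
  define U1 where "U1 = {q. le p (e q)}"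
  define U2 where "U2 = {q. le p (e q) \<and> e q \<noteq> p}"
  have "U1 = (\<Union>p'\<in>{p'\<in>P. le p p'}. e -` {p'})" unfolding U1_def using eP by blast
  then have U1X: "U1 \<in> \<XX>" using fin fib by (auto intro!: X.finite_UN)
  have "U2 = (\<Union>p'\<in>{p'\<in>P. le p p' \<and> p' \<noteq> p}. e -` {p'})" unfolding U2_def using eP by blast
  then have U2X: "U2 \<in> \<XX>" using fin fib by (auto intro!: X.finite_UN)
  have U1up: "upset U1" unfolding upset_def U1_def using mono trans p eP by blast
  have U2up: "upset U2" unfolding upset_def U2_def
  proof (intro allI impI)
    fix u q assume u: "u \<in> {q. le p (e q) \<and> e q \<noteq> p}" and uq: "u \<le> q"
    have l: "le (e u) (e q)" using mono uq by blast
    then have lq: "le p (e q)" using trans p eP u by blast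
    have "e q \<noteq> p"
    proof
      assume "e q = p"
      then have a1: "le (e u) p" using l by simp
      have a2: "le p (e u)" using u by simp
      have "e u = p" using anti eP p a1 a2 by blast
      then show False using u by simp
    qed
    then show "q \<in> {q. le p (e q) \<and> e q \<noteq> p}" using lq by simp
  qed
  have "e -` {p} = U1 - U2" unfolding U1_def U2_def using refl by auto
  then show ?thesis using H U1X U2X U1up U2up by auto
qed

lemma meas_comp:
  fixes \<AA> \<XX> :: "'q::order set set"
  assumes A: "algebra UNIV \<AA>" and X: "algebra UNIV \<XX>"
    and H: "\<forall>U\<in>\<XX>. upset U \<longrightarrow> U \<in> \<AA>"
    and e: "encoding_map \<XX> P le e"
  shows "measurable_wrt \<AA> (\<lambda>q. h (e q))"
  unfolding measurable_wrt_def
proof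
  fix B :: "ennreal set"
  interpret A: algebra UNIV \<AA> by (rule A)
  have fin: "finite P" and eP: "\<forall>q. e q \<in> P" using e unfolding encoding_map_def fin_poset_def by blast+
  have "(\<lambda>q. h (e q)) -` B = (\<Union>p\<in>{p\<in>P. h p \<in> B}. e -` {p})" using eP by blast
  moreover have "(\<Union>p\<in>{p\<in>P. h p \<in> B}. e -` {p}) \<in> \<AA>"
    using fin fiber_in[OF A X H e] by (auto intro!: A.finite_UN)
  ultimately show "(\<lambda>q. h (e q)) -` B \<in> \<AA>" by simp
qed

lemma dim_line:
  fixes \<delta> :: "'k::field vec"
  assumes "\<delta> \<noteq> 0"
  shows "vdim (vs.span {\<delta>}) = 1"
proof -
  have ind: "vs.independent {\<delta>}" using assms vs.independent_insert[of \<delta> "{}"] by simp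
  have "vs.dim (vs.span {\<delta>}) = vs.dim {\<delta>}" by (rule vs.dim_span)
  also have "\<dots> = card {\<delta>}" by (rule vs.dim_eq_card_independent[OF ind])
  finally show ?thesis unfolding vdim_def by simp
qed

lemma dim_zero_sp: "vdim (vs.span ({} :: 'k::field vec set)) = 0"
proof -
  have "vs.dim (vs.span ({} :: 'k::field vec set)) = vs.dim ({} :: 'k::field vec set)" by (rule vs.dim_span)
  also have "\<dots> = card ({} :: 'k::field vec set)" by (rule vs.dim_eq_card_independent[OF vs.independent_empty])
  finally show ?thesis unfolding vdim_def by simp
qed

lemma fd_span: "finite B \<Longrightarrow> fd_subspace (vs.span (B :: 'k::field vec set))"
proof -
  assume B: "finite B"
  have "vs.subspace (vs.span B)" by (rule vs.subspace_span)
  moreover have "\<exists>B'. finite B' \<and> vs.span B = vs.span B'" using B by (intro exI[of _ B]) simp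
  ultimately show ?thesis unfolding fd_subspace_def by (intro conjI)
qed

lemma pmod_span:
  fixes G :: "'i \<Rightarrow> 'k::field vec set"
  assumes "\<And>i. i \<in> I \<Longrightarrow> finite (G i)"
    and "\<And>i j. i \<in> I \<Longrightarrow> j \<in> I \<Longrightarrow> le i j \<Longrightarrow> G i \<subseteq> G j"
  shows "vect_pmod I le (\<lambda>i. vs.span (G i)) (\<lambda>_ _ x. x)"
proof -
  have a: "\<forall>i\<in>I. fd_subspace (vs.span (G i))" using assms(1) fd_span by blast
  have b: "\<forall>i\<in>I. \<forall>j\<in>I. le i j \<longrightarrow> linear_on (vs.span (G i)) (\<lambda>x. x) \<and> (\<lambda>x. x) ` vs.span (G i) \<subseteq> vs.span (G j)"
  proof (intro ballI impI conjI)
    fix i j assume "i \<in> I" "j \<in> I" "le i j"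
    then have "G i \<subseteq> G j" using assms(2) by blast
    then show "(\<lambda>x. x) ` vs.span (G i) \<subseteq> vs.span (G j)" using vs.span_mono by simp
  qed (simp add: linear_on_def)
  show ?thesis unfolding vect_pmod_def using a b by simp
qed

theorem mainTheorem18:
  fixes \<AA> \<XX> :: "'q::order set set"
  assumes "algebra UNIV \<AA>" and "algebra UNIV \<XX>"
  shows "((\<forall>(V :: 'q \<Rightarrow> 'k::field vec set) \<phi>.
             vect_pmod UNIV (\<le>) V \<phi> \<and> vect_fin_encoded \<XX> V \<phi> \<longrightarrow>
             measurable_wrt \<AA> (\<lambda>q. of_nat (vdim (V q))))
          \<longleftrightarrow> (\<forall>U\<in>\<XX>. upset U \<longrightarrow> U \<in> \<AA>))
       \<and> ((\<forall>U\<in>\<XX>. upset U \<longrightarrow> U \<in> \<AA>) \<longleftrightarrow> gen_algebra UNIV {U\<in>\<XX>. upset U} \<subseteq> \<AA>)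
       \<and> ((\<forall>U\<in>\<XX>. upset U \<longrightarrow> U \<in> \<AA>) \<longrightarrow>
           (\<forall>(C :: ('o, 'm) category) \<alpha> F0 F1.
              abelian_cat C \<and> amplitude C \<alpha> \<and> cat_functor C UNIV (\<le>) F0 F1
              \<and> cat_fin_encoded C \<XX> F0 F1 \<longrightarrow>
              measurable_wrt \<AA> (\<lambda>q. \<alpha> (F0 q))))"

proof -
  interpret X: algebra UNIV \<XX> by (rule assms(2))
  interpret A: algebra UNIV \<AA> by (rule assms(1))
  let ?H = "\<forall>U\<in>\<XX>. upset U \<longrightarrow> U \<in> \<AA>"
  have P1: "(\<forall>(V :: 'q \<Rightarrow> 'k::field vec set) \<phi>.
             vect_pmod UNIV (\<le>) V \<phi> \<and> vect_fin_encoded \<XX> V \<phi> \<longrightarrow>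
             measurable_wrt \<AA> (\<lambda>q. of_nat (vdim (V q)))) \<longrightarrow> ?H"
  proof (intro impI ballI)
    assume M: "\<forall>(V :: 'q \<Rightarrow> 'k::field vec set) \<phi>.
             vect_pmod UNIV (\<le>) V \<phi> \<and> vect_fin_encoded \<XX> V \<phi> \<longrightarrow>
             measurable_wrt \<AA> (\<lambda>q. of_nat (vdim (V q)))"
    fix U assume UX: "U \<in> \<XX>" and up: "upset U"
    define \<delta> :: "'k vec" where "\<delta> = (\<lambda>n. if n = 0 then 1 else 0)"
    have d0: "\<delta> \<noteq> 0"
    proof
      assume "\<delta> = 0"
      then have "\<delta> 0 = (0::'k vec) 0" by simp
      then show False by (simp add: \<delta>_def)
    qed
    define G :: "nat \<Rightarrow> 'k vec set" where "G p = (if p = 1 then {\<delta>} else {})" for p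
    define e :: "'q \<Rightarrow> nat" where "e q = (if q \<in> U then 1 else 0)" for q
    define V where "V q = vs.span (G (e q))" for q
    have emono: "q \<le> q' \<Longrightarrow> e q \<le> e q'" for q q' using up unfolding e_def upset_def by auto
    have pm: "vect_pmod UNIV (\<le>) V (\<lambda>_ _ x. x)"
      unfolding V_def by (rule pmod_span) (use up in \<open>auto simp: G_def e_def upset_def\<close>)
    have pm': "vect_pmod {0,1} (\<le>) (\<lambda>p. vs.span (G p)) (\<lambda>_ _ x. x)"
      by (rule pmod_span) (auto simp: G_def)
    have fe0: "e -` {0} = UNIV - U" unfolding e_def by auto
    have fe1: "e -` {1} = U" unfolding e_def by auto
    have em: "encoding_map \<XX> {0,1} (\<le>) e"
      unfolding encoding_map_def fin_poset_def using emono fe0 fe1 UX X.compl_sets[OF UX]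
      by (auto simp: e_def)
    have fe: "vect_fin_encoded \<XX> V (\<lambda>_ _ x. x)"
      unfolding vect_fin_encoded_def
      apply (rule exI[of _ "{0,1}"], rule exI[of _ "(\<le>)"], rule exI[of _ e],
             rule exI[of _ "\<lambda>p. vs.span (G p)"], rule exI[of _ "\<lambda>_ _ x. x"], rule exI[of _ "\<lambda>_ x. x"])
      using em pm' by (simp add: V_def linear_on_def bij_betw_def)
    have mw: "measurable_wrt \<AA> (\<lambda>q. of_nat (vdim (V q)))" using M pm fe by blast
    have "(\<lambda>q. of_nat (vdim (V q)) :: ennreal) -` {1} \<in> \<AA>"
      using mw unfolding measurable_wrt_def by (simp add: borel_closed)
    moreover have "(\<lambda>q. of_nat (vdim (V q)) :: ennreal) -` {1} = U"
    proof -
      have "of_nat (vdim (V q)) = (if q \<in> U then 1 else (0::ennreal))" for q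
        using dim_line[OF d0] dim_zero_sp by (cases "q \<in> U") (simp_all add: V_def G_def e_def)
      then show ?thesis by auto
    qed
    ultimately show "U \<in> \<AA>" by simp
  qed
  have P1': "?H \<longrightarrow> (\<forall>(V :: 'q \<Rightarrow> 'k::field vec set) \<phi>.
             vect_pmod UNIV (\<le>) V \<phi> \<and> vect_fin_encoded \<XX> V \<phi> \<longrightarrow>
             measurable_wrt \<AA> (\<lambda>q. of_nat (vdim (V q))))"
  proof (intro impI allI)
    fix V :: "'q \<Rightarrow> 'k::field vec set" and \<phi>
    assume H: ?H and VV: "vect_pmod UNIV (\<le>) V \<phi> \<and> vect_fin_encoded \<XX> V \<phi>"
    obtain P le e V' \<phi>' \<eta> where e: "encoding_map \<XX> (P::nat set) le e"
      and iso: "\<forall>q. linear_on (V q) (\<eta> q) \<and> bij_betw (\<eta> q) (V q) (V' (e q))"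
      using VV unfolding vect_fin_encoded_def by blast
    have all: "\<forall>i\<in>UNIV. fd_subspace (V i)" using conjunct1[OF conjunct1[OF VV[unfolded vect_pmod_def]]] .
    have sub: "vs.subspace (V q)" for q using all unfolding fd_subspace_def by simp
    have "vdim (V q) = vdim (V' (e q))" for q
      using vdim_bij[OF sub, of q "\<eta> q" "V' (e q)"] iso by simp
    then have eqf: "(\<lambda>q. of_nat (vdim (V q)) :: ennreal) = (\<lambda>q. (\<lambda>p. of_nat (vdim (V' p))) (e q))"
      by simp
    show "measurable_wrt \<AA> (\<lambda>q. of_nat (vdim (V q)))"
      unfolding eqf by (rule meas_comp[OF assms H e])
  qed
  have P2: "?H \<longleftrightarrow> gen_algebra UNIV {U\<in>\<XX>. upset U} \<subseteq> \<AA>"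
  proof
    assume H: ?H
    show "gen_algebra UNIV {U\<in>\<XX>. upset U} \<subseteq> \<AA>"
      unfolding gen_algebra_def using H assms(1) by (intro Inter_lower) auto
  next
    assume G: "gen_algebra UNIV {U\<in>\<XX>. upset U} \<subseteq> \<AA>"
    have "{U\<in>\<XX>. upset U} \<subseteq> gen_algebra UNIV {U\<in>\<XX>. upset U}"
      unfolding gen_algebra_def by blast
    then show ?H using G by blast
  qed
  have P3: "?H \<longrightarrow>
           (\<forall>(C :: ('o, 'm) category) \<alpha> F0 F1.
              abelian_cat C \<and> amplitude C \<alpha> \<and> cat_functor C UNIV (\<le>) F0 F1
              \<and> cat_fin_encoded C \<XX> F0 F1 \<longrightarrow>
              measurable_wrt \<AA> (\<lambda>q. \<alpha> (F0 q)))"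
  proof (intro impI allI)
    fix C :: "('o, 'm) category" and \<alpha> F0 F1
    assume H: ?H and CC: "abelian_cat C \<and> amplitude C \<alpha> \<and> cat_functor C UNIV (\<le>) F0 F1
              \<and> cat_fin_encoded C \<XX> F0 F1"
    obtain P le e G0 G1 \<eta> where e: "encoding_map \<XX> (P::nat set) le e"
      and iso: "\<forall>q. \<eta> q \<in> hom C (F0 q) (G0 (e q)) \<and> cat_iso C (\<eta> q)"
      using CC unfolding cat_fin_encoded_def by blast
    have "\<alpha> (F0 q) = \<alpha> (G0 (e q))" for q
      using amp_iso[of C \<alpha> "\<eta> q" "F0 q" "G0 (e q)"] CC iso by blast
    then have eqf: "(\<lambda>q. \<alpha> (F0 q)) = (\<lambda>q. (\<lambda>p. \<alpha> (G0 p)) (e q))" by simp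
    show "measurable_wrt \<AA> (\<lambda>q. \<alpha> (F0 q))"
      unfolding eqf by (rule meas_comp[OF assms H e])
  qed
  show ?thesis
    apply (intro conjI)
      apply (rule iffI)
       apply (erule P1[THEN mp])
      apply (erule P1'[THEN mp])
     apply (rule P2)
    apply (rule P3)
    done
qed

end
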